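(* Let $G$ be $\mathrm{Sym}(d)$ or $\mathrm{Alt}(d)$ for some $d\ge 2$, acting naturally on $X=\{1,\dots,d\}$. Then the natural action does not extend properly to a $2$-by-block-transitive action: there is no $G$-set $\Omega$ with a $G$-equivariant surjection $\Omega\to X$ whose fibres have size at least $2$ such that $G$ acts transitively on ordered pairs of points of $\Omega$ lying in distinct fibres. *)

theory Defs
  imports "HOL-Algebra.Sym_Groups" "HOL-Algebra.Group_Action"
begin

definition proper_2bbt_extension ::
  "('g, 'm) monoid_scheme \<Rightarrow> 'x set \<Rightarrow> ('g \<Rightarrow> 'x \<Rightarrow> 'x) \<Rightarrow> 'w set \<Rightarrow> ('g \<Rightarrow> 'w \<Rightarrow> 'w) \<Rightarrow> ('w \<Rightarrow> 'x) \<Rightarrow> bool"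
  where "proper_2bbt_extension G X act \<Omega> \<phi> \<pi> \<longleftrightarrow>
     group_action G \<Omega> \<phi> \<and>
     \<pi> ` \<Omega> = X \<and>
     (\<forall>g\<in>carrier G. \<forall>w\<in>\<Omega>. \<pi> (\<phi> g w) = act g (\<pi> w)) \<and>
     (\<forall>x\<in>X. \<exists>a\<in>\<Omega>. \<exists>b\<in>\<Omega>. a \<noteq> b \<and> \<pi> a = x \<and> \<pi> b = x) \<and>
     (\<forall>a\<in>\<Omega>. \<forall>b\<in>\<Omega>. \<forall>c\<in>\<Omega>. \<forall>e\<in>\<Omega>. \<pi> a \<noteq> \<pi> b \<longrightarrow> \<pi> c \<noteq> \<pi> e \<longrightarrow>
        (\<exists>g\<in>carrier G. \<phi> g a = c \<and> \<phi> g b = e))"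

end

theory Submission
  imports Defs
begin



definition c3 :: "nat \<Rightarrow> nat \<Rightarrow> nat \<Rightarrow> nat \<Rightarrow> nat" where
  "c3 p q r = transpose p q \<circ> transpose q r"

lemma c3_conj:
  assumes "inj g"
  shows "g \<circ> c3 p q r = c3 (g p) (g q) (g r) \<circ> g"
proof (rule ext)
  fix w
  have e: "\<And>u v. (g u = g v) = (u = v)" using assms by (meson injD)
  show "(g \<circ> c3 p q r) w = (c3 (g p) (g q) (g r) \<circ> g) w"
    unfolding c3_def transpose_def using e by (auto dest: injD[OF assms])
qed

lemma c3_split:
  assumes "distinct [x,y,z,z']"
  shows "c3 x y z = c3 x y z' \<circ> c3 y z z'"
  using assms unfolding c3_def by (auto simp: fun_eq_iff transpose_def)

lemma c3_rot:
  assumes "distinct [p,q,r]"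
  shows "c3 p q r = c3 q r p"
  using assms unfolding c3_def by (auto simp: fun_eq_iff transpose_def)

lemma c3_inv:
  assumes "distinct [p,q,r]"
  shows "c3 p r q \<circ> c3 p q r = id"
  using assms unfolding c3_def by (auto simp: fun_eq_iff transpose_def)

lemma c3_apply1: "distinct [p,q,r] \<Longrightarrow> c3 p q r p = q"
  unfolding c3_def by (auto simp: transpose_def)

lemma word:
  assumes "distinct [p,p',q,t,t',r,s]"
  shows "((transpose p p' \<circ> transpose t t') \<circ> (transpose p' q \<circ> transpose r s)) \<circ>
         ((transpose p p' \<circ> transpose t t') \<circ> (transpose p' q \<circ> transpose r s)) = c3 p q p'"
proof (rule ext)
  fix w
  have d: "p \<noteq> p'" "p \<noteq> q" "p \<noteq> t" "p \<noteq> t'" "p \<noteq> r" "p \<noteq> s"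
     "p' \<noteq> q" "p' \<noteq> t" "p' \<noteq> t'" "p' \<noteq> r" "p' \<noteq> s"
     "q \<noteq> t" "q \<noteq> t'" "q \<noteq> r" "q \<noteq> s" "t \<noteq> t'" "t \<noteq> r" "t \<noteq> s"
     "t' \<noteq> r" "t' \<noteq> s" "r \<noteq> s" using assms by auto
  note d' = d d[symmetric]
  consider "w = p" | "w = p'" | "w = q" | "w = t" | "w = t'" | "w = r" | "w = s"
    | "w \<notin> {p,p',q,t,t',r,s}" by blast
  then show "(((transpose p p' \<circ> transpose t t') \<circ> (transpose p' q \<circ> transpose r s)) \<circ>
         ((transpose p p' \<circ> transpose t t') \<circ> (transpose p' q \<circ> transpose r s))) w = c3 p q p' w"
    unfolding c3_def by cases (simp_all add: d')
qed

lemma tt_cancel: "(transpose p q \<circ> transpose r s) \<circ> (transpose r s \<circ> transpose u v) = transpose p q \<circ> transpose u v"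
  by (simp add: fun_eq_iff)

lemma tt_inv: "(transpose r s \<circ> transpose p q) \<circ> (transpose p q \<circ> transpose r s) = id"
  by (simp add: fun_eq_iff)


lemma invol_even:
  assumes "finite S" "\<forall>w\<in>S. f w \<in> S \<and> f w \<noteq> w \<and> f (f w) = w"
  shows "even (card S)"
  using assms
proof (induction "card S" arbitrary: S rule: less_induct)
  case less
  show ?case
  proof (cases "S = {}")
    case True then show ?thesis by simp
  next
    case False
    then obtain w where w: "w \<in> S" by blast
    have fw: "f w \<in> S" "f w \<noteq> w" using less.prems(2) w by auto
    define S' where "S' = S - {w, f w}"
    have sub: "{w, f w} \<subseteq> S" using w fw by simp
    have c2: "card {w, f w} = 2" using fw(2) by simp
    have cS: "card S' = card S - 2" unfolding S'_def using card_Diff_subset[OF _ sub] c2 less.prems(1)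
      by (simp add: finite_subset[OF sub])
    have ge: "card S \<ge> 2" using card_mono[OF less.prems(1) sub] c2 by simp
    have fin: "finite S'" unfolding S'_def using less.prems(1) by simp
    have cl: "\<forall>v\<in>S'. f v \<in> S' \<and> f v \<noteq> v \<and> f (f v) = v"
    proof
      fix v assume v: "v \<in> S'"
      then have vS: "v \<in> S" "v \<noteq> w" "v \<noteq> f w" unfolding S'_def by auto
      have P: "f v \<in> S" "f v \<noteq> v" "f (f v) = v" using less.prems(2) vS(1) by auto
      have "f v \<noteq> w"
      proof
        assume "f v = w" then have "f (f v) = f w" by simp
        then show False using P(3) vS(3) by simp
      qed
      moreover have "f v \<noteq> f w"
      proof
        assume "f v = f w" then have "f (f v) = f (f w)" by simp
        then show False using P(3) less.prems(2) w vS(2) by simp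
      qed
      ultimately show "f v \<in> S' \<and> f v \<noteq> v \<and> f (f v) = v" using P unfolding S'_def by simp
    qed
    have "card S' < card S" using cS ge by simp
    then have "even (card S')" using less.hyps fin cl by blast
    moreover have "card S = card S' + 2" using cS ge by simp
    ultimately show ?thesis by simp
  qed
qed

locale bbt =
  fixes d :: nat and C :: "(nat \<Rightarrow> nat) set" and \<Omega> :: "'w set"
    and \<phi> :: "(nat \<Rightarrow> nat) \<Rightarrow> 'w \<Rightarrow> 'w" and \<pi> :: "'w \<Rightarrow> nat"
  assumes C_perm: "g \<in> C \<Longrightarrow> g permutes {1..d}"
    and C_comp: "g \<in> C \<Longrightarrow> h \<in> C \<Longrightarrow> g \<circ> h \<in> C"
    and act_comp: "g \<in> C \<Longrightarrow> h \<in> C \<Longrightarrow> w \<in> \<Omega> \<Longrightarrow> \<phi> (g \<circ> h) w = \<phi> g (\<phi> h w)"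
    and act_closed: "g \<in> C \<Longrightarrow> w \<in> \<Omega> \<Longrightarrow> \<phi> g w \<in> \<Omega>"
    and act_inj: "g \<in> C \<Longrightarrow> inj_on (\<phi> g) \<Omega>"
    and id_C: "id \<in> C"
    and act_id: "w \<in> \<Omega> \<Longrightarrow> \<phi> id w = w"
    and surj: "\<pi> ` \<Omega> = {1..d}"
    and eqv: "g \<in> C \<Longrightarrow> w \<in> \<Omega> \<Longrightarrow> \<pi> (\<phi> g w) = g (\<pi> w)"
    and fib: "x \<in> {1..d} \<Longrightarrow> \<exists>a\<in>\<Omega>. \<exists>b\<in>\<Omega>. a \<noteq> b \<and> \<pi> a = x \<and> \<pi> b = x"
    and PT: "a \<in> \<Omega> \<Longrightarrow> b \<in> \<Omega> \<Longrightarrow> c \<in> \<Omega> \<Longrightarrow> e \<in> \<Omega> \<Longrightarrow> \<pi> a \<noteq> \<pi> b \<Longrightarrow> \<pi> c \<noteq> \<pi> e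
       \<Longrightarrow> \<exists>g\<in>C. \<phi> g a = c \<and> \<phi> g b = e"
begin

lemma C_inj: "g \<in> C \<Longrightarrow> inj g"
  by (rule permutes_inj[OF C_perm])

lemma C_in:
  assumes "g \<in> C" "p \<in> {1..d}" shows "g p \<in> {1..d}"
  by (simp only: permutes_in_image[OF C_perm[OF assms(1)]] assms(2))

lemma pi_in: "w \<in> \<Omega> \<Longrightarrow> \<pi> w \<in> {1..d}"
proof -
  assume "w \<in> \<Omega>"
  then have "\<pi> w \<in> \<pi> ` \<Omega>" by (rule imageI)
  then show ?thesis by (simp only: surj)
qed

lemma pt_of: "x \<in> {1..d} \<Longrightarrow> \<exists>a\<in>\<Omega>. \<pi> a = x"
proof -
  assume "x \<in> {1..d}"
  then have "x \<in> \<pi> ` \<Omega>" by (simp only: surj)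
  then show ?thesis by auto
qed

lemma other_fib:
  assumes "b0 \<in> \<Omega>"
  shows "\<exists>b\<in>\<Omega>. \<pi> b = \<pi> b0 \<and> b \<noteq> b0"
proof -
  obtain u v where "u \<in> \<Omega>" "v \<in> \<Omega>" "u \<noteq> v" "\<pi> u = \<pi> b0" "\<pi> v = \<pi> b0"
    using fib[OF pi_in[OF assms]] by blast
  then show ?thesis by (cases "u = b0") auto
qed

lemma act_cancel:
  assumes "g \<in> C" "w \<in> \<Omega>" "w' \<in> \<Omega>" "\<phi> g w = \<phi> g w'"
  shows "w = w'"
  using act_inj[OF assms(1)] assms(2-4) by (meson inj_on_eq_iff)

lemma sym_case:
  assumes d2: "d \<ge> 2" and T: "\<And>p q. p \<in> {1..d} \<Longrightarrow> q \<in> {1..d} \<Longrightarrow> transpose p q \<in> C"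
  shows False
proof -
  have X: "(1::nat) \<in> {1..d}" "(2::nat) \<in> {1..d}" using d2 by auto
  obtain a where a: "a \<in> \<Omega>" "\<pi> a = 1" using pt_of[OF X(1)] by blast
  define t where "t = transpose (1::nat) 2"
  have tC: "t \<in> C" unfolding t_def using T X by blast
  define c where "c = \<phi> t a"
  have c: "c \<in> \<Omega>" "\<pi> c = 2" unfolding c_def using act_closed[OF tC a(1)] eqv[OF tC a(1)] a(2)
    by (auto simp: t_def)
  obtain b' where b': "b' \<in> \<Omega>" "\<pi> b' = 2" "b' \<noteq> c" using other_fib[OF c(1)] c(2) by auto
  obtain g where g: "g \<in> C" "\<phi> g a = a" "\<phi> g c = b'"
    using PT[OF a(1) c(1) a(1) b'(1)] a(2) c(2) b'(2) by auto
  have g1: "g 1 = 1" using eqv[OF g(1) a(1)] g(2) a(2) by simp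
  have g2: "g 2 = 2" using eqv[OF g(1) c(1)] g(3) c(2) b'(2) by simp
  have inj: "inj g" using C_inj[OF g(1)] .
  have comm: "g \<circ> t = t \<circ> g"
  proof (rule ext)
    fix w
    show "(g \<circ> t) w = (t \<circ> g) w"
    proof (cases "w = 1 \<or> w = 2")
      case True then show ?thesis using g1 g2 by (auto simp: t_def)
    next
      case False
      then have "g w \<noteq> 1" "g w \<noteq> 2" using g1 g2 inj injD by metis+
      then show ?thesis using False by (simp add: t_def)
    qed
  qed
  have "b' = \<phi> g (\<phi> t a)" using g(3) c_def by simp
  also have "\<dots> = \<phi> (g \<circ> t) a" using act_comp[OF g(1) tC a(1)] by simp
  also have "\<dots> = \<phi> (t \<circ> g) a" using comm by simp
  also have "\<dots> = \<phi> t (\<phi> g a)" using act_comp[OF tC g(1) a(1)] by simp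
  also have "\<dots> = c" using g(2) c_def by simp
  finally show False using b'(3) by simp
qed

lemma small_case:
  assumes d2: "d \<ge> 2" and d4: "d \<le> 4" and E: "\<And>g. g \<in> C \<Longrightarrow> evenperm g"
  shows False
proof -
  have X: "(1::nat) \<in> {1..d}" "(2::nat) \<in> {1..d}" using d2 by auto
  obtain a a' where a: "a \<in> \<Omega>" "a' \<in> \<Omega>" "a \<noteq> a'" "\<pi> a = 1" "\<pi> a' = 1" using fib[OF X(1)] by blast
  obtain b where b: "b \<in> \<Omega>" "\<pi> b = 2" using pt_of[OF X(2)] by blast
  obtain g where g: "g \<in> C" "\<phi> g a = a'" "\<phi> g b = b"
    using PT[OF a(1) b(1) a(2) b(1)] a b by auto
  have g1: "g 1 = 1" using eqv[OF g(1) a(1)] g(2) a by simp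
  have g2: "g 2 = 2" using eqv[OF g(1) b(1)] g(3) b by simp
  have inj: "inj g" using C_inj[OF g(1)] .
  have ie: "\<And>x y. (g x = g y) = (x = y)" using inj by (simp add: inj_eq)
  have perm: "g permutes {1..d}" using C_perm[OF g(1)] .
  have gX: "\<And>w. w \<in> {1..d} \<Longrightarrow> g w \<in> {1..d}" by (simp only: permutes_in_image[OF perm])
  have gout: "\<And>w. w \<notin> {1..d} \<Longrightarrow> g w = w" by (rule permutes_not_in[OF perm])
  have "g = id"
  proof (rule ccontr)
    assume "g \<noteq> id"
    then obtain u where u: "g u \<noteq> u" by (auto simp: fun_eq_iff)
    have uX: "u \<in> {1..d}" proof (rule ccontr) assume "u \<notin> {1..d}" then show False using gout u by simp qed
    obtain v where v_def: "v = g u" by simp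
    have vX: "v \<in> {1..d}" using gX[OF uX] v_def by simp
    have u12: "u \<noteq> 1" "u \<noteq> 2" using u g1 g2 by auto
    have v12: "v \<noteq> 1" "v \<noteq> 2"
      using u12 v_def ie[of u 1] ie[of u 2] g1 g2 by auto
    have uv: "u \<noteq> v" using u v_def by simp
    have R: "\<And>w. w \<in> {1..d} \<Longrightarrow> w \<noteq> 1 \<Longrightarrow> w \<noteq> 2 \<Longrightarrow> w = u \<or> w = v"
    proof (rule ccontr)
      fix w assume w: "w \<in> {1..d}" "w \<noteq> 1" "w \<noteq> 2" "\<not> (w = u \<or> w = v)"
      have "{1,2,u,v,w} \<subseteq> {1..d}" using w uX vX X by auto
      then have "card {1,2,u,v,w} \<le> card {1..d}" by (intro card_mono) auto
      moreover have "card {1,2,u,v,w} = (5::nat)" using w u12 v12 uv by auto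
      ultimately show False using d4 by simp
    qed
    have gv: "g v = u"
    proof -
      have "g v \<in> {1..d}" using gX[OF vX] .
      moreover have "g v \<noteq> 1" using ie[of v 1] g1 v12 by simp
      moreover have "g v \<noteq> 2" using ie[of v 2] g2 v12 by simp
      moreover have "g v \<noteq> v" using ie[of v u] v_def uv by simp
      ultimately show ?thesis using R[of "g v"] by simp
    qed
    have "g = transpose u v"
    proof (rule ext)
      fix w
      show "g w = transpose u v w"
      proof (cases "w \<in> {1..d}")
        case True
        then consider "w = 1" | "w = 2" | "w = u" | "w = v" using R by fastforce
        then show ?thesis
        proof cases
          case 1 then show ?thesis using g1 u12 v12 by simp
        next
          case 2 then show ?thesis using g2 u12 v12 by simp
        next
          case 3 then show ?thesis using v_def by simp
        next
          case 4 then show ?thesis using gv by simp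
        qed
      next
        case False
        then have "g w = w" using gout by blast
        moreover have "w \<noteq> u" "w \<noteq> v" using False uX vX by auto
        ultimately show ?thesis by simp
      qed
    qed
    then have "evenperm g = False" using uv by (simp add: evenperm_swap)
    then show False using E[OF g(1)] by simp
  qed
  then show False using g(2) act_id[OF a(1)] a(3) by simp
qed

end

locale bbt_alt = bbt +
  assumes C_tt: "\<And>p q r s. p \<in> {1..d} \<Longrightarrow> q \<in> {1..d} \<Longrightarrow> r \<in> {1..d} \<Longrightarrow> s \<in> {1..d}
      \<Longrightarrow> p \<noteq> q \<Longrightarrow> r \<noteq> s \<Longrightarrow> transpose p q \<circ> transpose r s \<in> C"
    and d5: "d \<ge> 5"
begin

lemma c3_C:
  assumes "p \<in> {1..d}" "q \<in> {1..d}" "r \<in> {1..d}" "p \<noteq> q" "q \<noteq> r"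
  shows "c3 p q r \<in> C"
  unfolding c3_def using C_tt[OF assms(1,2) assms(2,3) assms(4,5)] .

lemma avoid:
  assumes "finite S" "card S < d"
  shows "\<exists>z. z \<in> {1..d} \<and> z \<notin> S"
proof (rule ccontr)
  assume "\<not> ?thesis"
  then have "{1..d} \<subseteq> S" by blast
  then have "card {1..d} \<le> card S" using assms(1) by (rule card_mono[rotated])
  then show False using assms(2) by simp
qed

lemma avoidL:
  assumes "length L < d"
  shows "\<exists>z. z \<in> {1..d} \<and> z \<notin> set L"
  using avoid[of "set L"] card_length[of L] assms by simp

lemma third:
  assumes "x \<in> {1..d}" "y \<in> {1..d}"
  shows "\<exists>z. z \<in> {1..d} \<and> z \<noteq> x \<and> z \<noteq> y"
proof -
  have "card {x,y} \<le> 2" by (simp add: card_insert_le_m1)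
  then obtain z where "z \<in> {1..d}" "z \<notin> {x,y}" using avoid[of "{x,y}"] d5 by force
  then show ?thesis by blast
qed

lemma conj_act:
  assumes g: "g \<in> C" and w: "w \<in> \<Omega>" and X: "p \<in> {1..d}" "q \<in> {1..d}" "r \<in> {1..d}"
    and pq: "p \<noteq> q" and qr: "q \<noteq> r"
  shows "\<phi> g (\<phi> (c3 p q r) w) = \<phi> (c3 (g p) (g q) (g r)) (\<phi> g w)"
proof -
  have cC: "c3 p q r \<in> C" using c3_C[OF X pq qr] .
  have ie: "\<And>u v. (g u = g v) = (u = v)" using C_inj[OF g] by (simp add: inj_eq)
  have cC': "c3 (g p) (g q) (g r) \<in> C"
    using c3_C[OF C_in[OF g X(1)] C_in[OF g X(2)] C_in[OF g X(3)]] pq qr ie by simp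
  have "\<phi> g (\<phi> (c3 p q r) w) = \<phi> (g \<circ> c3 p q r) w" using act_comp[OF g cC w] by simp
  also have "\<dots> = \<phi> (c3 (g p) (g q) (g r) \<circ> g) w" using c3_conj[OF C_inj[OF g]] by simp
  also have "\<dots> = \<phi> (c3 (g p) (g q) (g r)) (\<phi> g w)" using act_comp[OF cC' g w] .
  finally show ?thesis .
qed

definition One where
  "One a b \<longleftrightarrow> (\<exists>z. z \<in> {1..d} \<and> z \<noteq> \<pi> a \<and> z \<noteq> \<pi> b \<and> \<phi> (c3 (\<pi> a) (\<pi> b) z) a = b)"

definition Two where
  "Two a b \<longleftrightarrow> (\<exists>z z'. z \<in> {1..d} \<and> z \<noteq> \<pi> a \<and> z \<noteq> \<pi> b \<and> z' \<in> {1..d} \<and> z' \<noteq> \<pi> a \<and> z' \<noteq> \<pi> b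
      \<and> z \<noteq> z' \<and> \<phi> (c3 (\<pi> a) (\<pi> b) z) a = b \<and> \<phi> (c3 (\<pi> a) (\<pi> b) z') a = b)"

lemma transport_step:
  assumes a: "a \<in> \<Omega>" and b: "b \<in> \<Omega>" and ab: "\<pi> a \<noteq> \<pi> b" and g: "g \<in> C"
    and z: "z \<in> {1..d}" "z \<noteq> \<pi> a" "z \<noteq> \<pi> b" and e: "\<phi> (c3 (\<pi> a) (\<pi> b) z) a = b"
  shows "g z \<in> {1..d} \<and> g z \<noteq> \<pi> (\<phi> g a) \<and> g z \<noteq> \<pi> (\<phi> g b)
     \<and> \<phi> (c3 (\<pi> (\<phi> g a)) (\<pi> (\<phi> g b)) (g z)) (\<phi> g a) = \<phi> g b"
proof -
  have ie: "\<And>u v. (g u = g v) = (u = v)" using C_inj[OF g] by (simp add: inj_eq)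
  have pa: "\<pi> (\<phi> g a) = g (\<pi> a)" using eqv[OF g a] .
  have pb: "\<pi> (\<phi> g b) = g (\<pi> b)" using eqv[OF g b] .
  have "\<phi> g b = \<phi> g (\<phi> (c3 (\<pi> a) (\<pi> b) z) a)" using e by simp
  also have "\<dots> = \<phi> (c3 (g (\<pi> a)) (g (\<pi> b)) (g z)) (\<phi> g a)"
    using conj_act[OF g a pi_in[OF a] pi_in[OF b] z(1) ab] z by simp
  finally show ?thesis using pa pb ie z C_in[OF g z(1)] by simp
qed

lemma transport_one:
  assumes a: "a \<in> \<Omega>" and b: "b \<in> \<Omega>" and ab: "\<pi> a \<noteq> \<pi> b" and g: "g \<in> C" and o: "One a b"
  shows "One (\<phi> g a) (\<phi> g b)"
proof -
  obtain z where z: "z \<in> {1..d}" "z \<noteq> \<pi> a" "z \<noteq> \<pi> b" "\<phi> (c3 (\<pi> a) (\<pi> b) z) a = b"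
    using o unfolding One_def by blast
  show ?thesis unfolding One_def using transport_step[OF a b ab g z] by blast
qed

lemma transport_two:
  assumes a: "a \<in> \<Omega>" and b: "b \<in> \<Omega>" and ab: "\<pi> a \<noteq> \<pi> b" and g: "g \<in> C" and o: "Two a b"
  shows "Two (\<phi> g a) (\<phi> g b)"
proof -
  obtain z z' where z: "z \<in> {1..d}" "z \<noteq> \<pi> a" "z \<noteq> \<pi> b" "z' \<in> {1..d}" "z' \<noteq> \<pi> a" "z' \<noteq> \<pi> b" "z \<noteq> z'"
     "\<phi> (c3 (\<pi> a) (\<pi> b) z) a = b" "\<phi> (c3 (\<pi> a) (\<pi> b) z') a = b"
    using o unfolding Two_def by blast
  have ie: "g z \<noteq> g z'" using C_inj[OF g] z(7) by (simp add: inj_eq)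
  show ?thesis unfolding Two_def
    using transport_step[OF a b ab g z(1-3,8)] transport_step[OF a b ab g z(4-6,9)] ie by blast
qed

lemma c3_pt:
  assumes a: "a \<in> \<Omega>" and y: "y \<in> {1..d}" "y \<noteq> \<pi> a" and z: "z \<in> {1..d}" "z \<noteq> \<pi> a" "z \<noteq> y"
  shows "\<phi> (c3 (\<pi> a) y z) a \<in> \<Omega> \<and> \<pi> (\<phi> (c3 (\<pi> a) y z) a) = y"
proof -
  have cC: "c3 (\<pi> a) y z \<in> C" using c3_C[OF pi_in[OF a] y(1) z(1)] y(2) z(3) by simp
  have "c3 (\<pi> a) y z (\<pi> a) = y" unfolding c3_def using y(2) z(2) by simp
  then show ?thesis using act_closed[OF cC a] eqv[OF cC a] by simp
qed

lemma one_all: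
  assumes a: "a \<in> \<Omega>" and b: "b \<in> \<Omega>" and ab: "\<pi> a \<noteq> \<pi> b"
  shows "One a b"
proof -
  obtain z where z: "z \<in> {1..d}" "z \<noteq> \<pi> a" "z \<noteq> \<pi> b" using third[OF pi_in[OF a] pi_in[OF b]] by blast
  define b0 where "b0 = \<phi> (c3 (\<pi> a) (\<pi> b) z) a"
  have b0: "b0 \<in> \<Omega>" "\<pi> b0 = \<pi> b" using c3_pt[OF a pi_in[OF b] ab[symmetric] z(1,2)] z(3) b0_def by auto
  have o: "One a b0" unfolding One_def using z b0 b0_def by auto
  obtain g where g: "g \<in> C" "\<phi> g a = a" "\<phi> g b0 = b"
    using PT[OF a b0(1) a b] ab b0(2) by auto
  show ?thesis using transport_one[OF a b0(1) _ g(1) o] ab b0(2) g by simp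
qed

lemma two_spread:
  assumes a0: "a0 \<in> \<Omega>" and b0: "b0 \<in> \<Omega>" and ab0: "\<pi> a0 \<noteq> \<pi> b0" and t: "Two a0 b0"
    and a: "a \<in> \<Omega>" and b: "b \<in> \<Omega>" and ab: "\<pi> a \<noteq> \<pi> b"
  shows "Two a b"
proof -
  obtain g where g: "g \<in> C" "\<phi> g a0 = a" "\<phi> g b0 = b" using PT[OF a0 b0 a b ab0 ab] by blast
  show ?thesis using transport_two[OF a0 b0 ab0 g(1) t] g by simp
qed

lemma two_case:
  assumes T: "\<And>a b. a \<in> \<Omega> \<Longrightarrow> b \<in> \<Omega> \<Longrightarrow> \<pi> a \<noteq> \<pi> b \<Longrightarrow> Two a b"
  shows False
proof -
  have X1: "(1::nat) \<in> {1..d}" using d5 by simp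
  obtain a where a: "a \<in> \<Omega>" "\<pi> a = 1" using pt_of[OF X1] by blast
  define x where "x = \<pi> a"
  have xX: "x \<in> {1..d}" using pi_in[OF a(1)] x_def by simp
  define S where "S = (\<lambda>p q r. \<phi> (c3 p q r) a = a)"
  have RS: "(\<phi> (c3 x y z) a = \<phi> (c3 x y z') a) \<longleftrightarrow> S y z z'"
    if "y \<in> {1..d}" "z \<in> {1..d}" "z' \<in> {1..d}" "x \<noteq> y" "x \<noteq> z" "x \<noteq> z'" "y \<noteq> z" "y \<noteq> z'" "z \<noteq> z'"
    for y z z'
  proof -
    have sp: "c3 x y z = c3 x y z' \<circ> c3 y z z'" using c3_split[of x y z z'] that by simp
    have C1: "c3 x y z' \<in> C" using c3_C[OF xX that(1,3)] that by simp
    have C2: "c3 y z z' \<in> C" using c3_C[OF that(1,2,3)] that by simp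
    have e: "\<phi> (c3 x y z) a = \<phi> (c3 x y z') (\<phi> (c3 y z z') a)"
      using sp act_comp[OF C1 C2 a(1)] by simp
    show ?thesis
    proof
      assume h: "\<phi> (c3 x y z) a = \<phi> (c3 x y z') a"
      show "S y z z'" unfolding S_def
        using act_cancel[OF C1 act_closed[OF C2 a(1)] a(1)] h e by simp
    next
      assume "S y z z'"
      then show "\<phi> (c3 x y z) a = \<phi> (c3 x y z') a" using e unfolding S_def by simp
    qed
  qed
  have rot: "S p q r = S q r p" if "p \<noteq> q" "q \<noteq> r" "p \<noteq> r" for p q r
    unfolding S_def using c3_rot[of p q r] that by simp
  have inv: "S p r q" if "p \<in> {1..d}" "q \<in> {1..d}" "r \<in> {1..d}" "p \<noteq> q" "q \<noteq> r" "p \<noteq> r" "S p q r"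
    for p q r
  proof -
    have C1: "c3 p r q \<in> C" using c3_C[OF that(1,3,2)] that by simp
    have C2: "c3 p q r \<in> C" using c3_C[OF that(1,2,3)] that by simp
    have "\<phi> (c3 p r q) a = \<phi> (c3 p r q) (\<phi> (c3 p q r) a)" using that(7) unfolding S_def by simp
    also have "\<dots> = \<phi> (c3 p r q \<circ> c3 p q r) a" using act_comp[OF C1 C2 a(1)] by simp
    also have "\<dots> = a" using c3_inv[of p q r] that act_id[OF a(1)] by simp
    finally show ?thesis unfolding S_def .
  qed
  have ex: "\<exists>z'. z' \<in> {1..d} \<and> z' \<noteq> x \<and> z' \<noteq> y \<and> z' \<noteq> z \<and> S y z z'"
    if "y \<in> {1..d}" "z \<in> {1..d}" "x \<noteq> y" "x \<noteq> z" "y \<noteq> z" for y z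
  proof -
    define b where "b = \<phi> (c3 x y z) a"
    have b: "b \<in> \<Omega>" "\<pi> b = y" using c3_pt[OF a(1) that(1) _ that(2)] that b_def x_def by auto
    have "Two a b" using T[OF a(1) b(1)] b(2) that(3) x_def by simp
    then obtain z1 z2 where z: "z1 \<in> {1..d}" "z1 \<noteq> x" "z1 \<noteq> y" "z2 \<in> {1..d}" "z2 \<noteq> x" "z2 \<noteq> y"
      "z1 \<noteq> z2" "\<phi> (c3 x y z1) a = b" "\<phi> (c3 x y z2) a = b"
      unfolding Two_def using b(2) x_def by auto
    show ?thesis
    proof (cases "z1 = z")
      case True
      then have "S y z z2" using RS[OF that(1,2) z(4) that(3,4) z(5)[symmetric] that(5) z(6)[symmetric]] z(7)
        z(8,9) b_def by simp
      then show ?thesis using z True by blast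
    next
      case False
      then have "S y z z1" using RS[OF that(1,2) z(1) that(3,4) z(2)[symmetric] that(5) z(3)[symmetric]]
        z(8) b_def by simp
      then show ?thesis using z False by blast
    qed
  qed
  have tr: "S y z' z''" if "y \<in> {1..d}" "z \<in> {1..d}" "z' \<in> {1..d}" "z'' \<in> {1..d}"
    "x \<noteq> y" "x \<noteq> z" "x \<noteq> z'" "x \<noteq> z''" "y \<noteq> z" "y \<noteq> z'" "y \<noteq> z''" "z \<noteq> z'" "z \<noteq> z''" "z' \<noteq> z''"
    "S y z z'" "S y z z''" for y z z' z''
  proof -
    have "\<phi> (c3 x y z) a = \<phi> (c3 x y z') a" using RS[of y z z'] that by simp
    moreover have "\<phi> (c3 x y z) a = \<phi> (c3 x y z'') a" using RS[of y z z''] that by simp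
    ultimately have "\<phi> (c3 x y z') a = \<phi> (c3 x y z'') a" by simp
    then show ?thesis using RS[of y z' z''] that by simp
  qed
  have cj: "S p r s" if "p \<in> {1..d}" "q \<in> {1..d}" "r \<in> {1..d}" "s \<in> {1..d}" "w \<in> {1..d}"
     "q \<noteq> r" "r \<noteq> w" "q \<noteq> w" "p \<noteq> q" "p \<noteq> r" "p \<noteq> w" "s \<noteq> q" "s \<noteq> r" "s \<noteq> w" "p \<noteq> s"
     "S q r w" "S p q s" for p q r s w
  proof -
    define g where "g = c3 q r w"
    have gC: "g \<in> C" unfolding g_def using c3_C[OF that(2,3,5)] that by simp
    have C1: "c3 p q s \<in> C" using c3_C[OF that(1,2,4)] that by simp
    have C2: "c3 p r s \<in> C" using c3_C[OF that(1,3,4)] that by simp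
    have gp: "g p = p" "g q = r" "g s = s" unfolding g_def c3_def using that by auto
    have comm: "g \<circ> c3 p q s = c3 p r s \<circ> g" using c3_conj[OF C_inj[OF gC], of p q s] gp by simp
    have ga: "\<phi> g a = a" using that(16) unfolding S_def g_def by simp
    have "\<phi> (c3 p r s) a = \<phi> (c3 p r s) (\<phi> g a)" using ga by simp
    also have "\<dots> = \<phi> (c3 p r s \<circ> g) a" using act_comp[OF C2 gC a(1)] by simp
    also have "\<dots> = \<phi> (g \<circ> c3 p q s) a" using comm by simp
    also have "\<dots> = \<phi> g (\<phi> (c3 p q s) a)" using act_comp[OF gC C1 a(1)] .
    also have "\<dots> = a" using that(17) ga unfolding S_def by simp
    finally show ?thesis unfolding S_def .
  qed
  have all: "S p q r" if pqr: "p \<in> {1..d}" "q \<in> {1..d}" "r \<in> {1..d}" "x \<noteq> p" "x \<noteq> q" "x \<noteq> r"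
    "p \<noteq> q" "q \<noteq> r" "p \<noteq> r" for p q r
  proof -
    obtain s where s: "s \<in> {1..d}" "s \<noteq> x" "s \<noteq> p" "s \<noteq> q" "S p q s"
      using ex[OF pqr(1,2,4,5,7)] by blast
    show ?thesis
    proof (cases "s = r")
      case True then show ?thesis using s by simp
    next
      case sr: False
      obtain w where w: "w \<in> {1..d}" "w \<noteq> x" "w \<noteq> q" "w \<noteq> r" "S q r w"
        using ex[OF pqr(2,3,5,6,8)] by blast
      show ?thesis
      proof (cases "w = p")
        case True
        then show ?thesis using w(5) rot[of p q r] pqr by simp
      next
        case wp: False
        show ?thesis
        proof (cases "s = w")
          case True
          have h1: "S q s p" using rot[of p q s] s pqr by simp
          have h2: "S q s r" using inv[of q r s] w True pqr s by simp
          have "S q p r" using tr[of q s p r] h1 h2 pqr s sr by simp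
          then have "S p r q" using rot[of q p r] pqr by simp
          then show ?thesis using inv[of p r q] pqr by simp
        next
          case sw: False
          have h: "S p r s" using cj[of p q r s w] pqr s w sr wp sw by simp
          have h1: "S p s q" using inv[of p q s] s pqr by simp
          have h2: "S p s r" using inv[of p r s] h s pqr sr by simp
          show ?thesis using tr[of p s q r] h1 h2 pqr s sr by simp
        qed
      qed
    qed
  qed
  obtain y where y: "y \<in> {1..d}" "y \<noteq> x" using third[OF xX xX] by blast
  obtain z0 where z0: "z0 \<in> {1..d}" "z0 \<noteq> x" "z0 \<noteq> y" using third[OF xX y(1)] by blast
  define b0 where "b0 = \<phi> (c3 x y z0) a"
  have b0: "b0 \<in> \<Omega>" "\<pi> b0 = y" using c3_pt[OF a(1) y(1) _ z0(1)] y z0 b0_def x_def by auto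
  obtain b where b: "b \<in> \<Omega>" "\<pi> b = y" "b \<noteq> b0" using other_fib[OF b0(1)] b0(2) by auto
  have "One a b" using one_all[OF a(1) b(1)] b(2) y(2) x_def by simp
  then obtain z where z: "z \<in> {1..d}" "z \<noteq> x" "z \<noteq> y" "\<phi> (c3 x y z) a = b"
    unfolding One_def using b(2) x_def by auto
  show False
  proof (cases "z = z0")
    case True then show False using z(4) b(3) b0_def by simp
  next
    case False
    have "S y z0 z" using all[of y z0 z] y z0 z False by simp
    then have "\<phi> (c3 x y z0) a = \<phi> (c3 x y z) a" using RS[of y z0 z] y z0 z False by simp
    then show False using z(4) b(3) b0_def by simp
  qed
qed

lemma uniq_card:
  assumes U: "\<And>a b. a \<in> \<Omega> \<Longrightarrow> b \<in> \<Omega> \<Longrightarrow> \<pi> a \<noteq> \<pi> b \<Longrightarrow> \<not> Two a b"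
    and w: "w \<in> \<Omega>"
  shows "card {v \<in> \<Omega>. \<pi> v = \<pi> w} = d - 2"
proof -
  define y where "y = \<pi> w"
  have yX: "y \<in> {1..d}" using pi_in[OF w] y_def by simp
  obtain x where x: "x \<in> {1..d}" "x \<noteq> y" using third[OF yX yX] by blast
  obtain a where a: "a \<in> \<Omega>" "\<pi> a = x" using pt_of[OF x(1)] by blast
  define F where "F = (\<lambda>z. \<phi> (c3 x y z) a)"
  have img: "{v \<in> \<Omega>. \<pi> v = y} = F ` ({1..d} - {x,y})"
  proof
    show "{v \<in> \<Omega>. \<pi> v = y} \<subseteq> F ` ({1..d} - {x,y})"
    proof
      fix v assume v: "v \<in> {v \<in> \<Omega>. \<pi> v = y}"
      have "One a v" using one_all[OF a(1)] v a(2) x(2) by simp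
      then obtain z where "z \<in> {1..d}" "z \<noteq> x" "z \<noteq> y" "\<phi> (c3 x y z) a = v"
        unfolding One_def using v a(2) by auto
      then show "v \<in> F ` ({1..d} - {x,y})" unfolding F_def by (intro image_eqI[of _ _ z]) auto
    qed
  next
    show "F ` ({1..d} - {x,y}) \<subseteq> {v \<in> \<Omega>. \<pi> v = y}"
    proof
      fix v assume "v \<in> F ` ({1..d} - {x,y})"
      then obtain z where z0: "z \<in> {1..d} - {x,y}" "v = F z" by (rule imageE)
      then have z: "z \<in> {1..d}" "z \<noteq> x" "z \<noteq> y" "v = F z" by auto
      show "v \<in> {v \<in> \<Omega>. \<pi> v = y}" using c3_pt[OF a(1) yX _ z(1)] a(2) x(2) z unfolding F_def by auto
    qed
  qed
  have inj: "inj_on F ({1..d} - {x,y})"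
  proof (rule inj_onI)
    fix z1 z2 assume z1: "z1 \<in> {1..d} - {x,y}" and z2: "z2 \<in> {1..d} - {x,y}" and e: "F z1 = F z2"
    show "z1 = z2"
    proof (rule ccontr)
      assume ne: "z1 \<noteq> z2"
      define b where "b = F z1"
      have b: "b \<in> \<Omega>" "\<pi> b = y" using c3_pt[OF a(1) yX _ _] a(2) x(2) z1 unfolding b_def F_def by auto
      have "Two a b" unfolding Two_def using z1 z2 ne e b(2) a(2) unfolding b_def F_def by auto
      then show False using U[OF a(1) b(1)] b(2) a(2) x(2) by simp
    qed
  qed
  have "card {v \<in> \<Omega>. \<pi> v = y} = card ({1..d} - {x,y})" using img card_image[OF inj] by simp
  also have "\<dots> = d - 2"
  proof -
    have sub: "{x,y} \<subseteq> {1..d}" using x yX by simp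
    have "card ({1..d} - {x,y}) = card {1..d} - card {x,y}" using card_Diff_subset[OF _ sub] by simp
    then show ?thesis using x(2) by simp
  qed
  finally show ?thesis using y_def by simp
qed

lemma uniq_small:
  assumes U: "\<And>a b. a \<in> \<Omega> \<Longrightarrow> b \<in> \<Omega> \<Longrightarrow> \<pi> a \<noteq> \<pi> b \<Longrightarrow> \<not> Two a b"
  shows "d \<le> 9 \<and> d \<noteq> 8"
proof -
  have X1: "(1::nat) \<in> {1..d}" using d5 by simp
  obtain a where a: "a \<in> \<Omega>" "\<pi> a = 1" using pt_of[OF X1] by blast
  define x where "x = \<pi> a"
  have xX: "x \<in> {1..d}" using pi_in[OF a(1)] x_def by simp
  define X' where "X' = {1..d} - {x}"
  have X'I: "w \<in> X' \<longleftrightarrow> w \<in> {1..d} \<and> w \<noteq> x" for w unfolding X'_def by simp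
  define E where "E = (\<lambda>p q r s. \<phi> (transpose p q \<circ> transpose r s) a = a)"
  have tC: "transpose p q \<circ> transpose r s \<in> C"
    if "p \<in> X'" "q \<in> X'" "r \<in> X'" "s \<in> X'" "p \<noteq> q" "r \<noteq> s" for p q r s
    using C_tt that X'I by simp
  have Esym: "E r s p q" if "p \<in> X'" "q \<in> X'" "r \<in> X'" "s \<in> X'" "p \<noteq> q" "r \<noteq> s" "E p q r s"
    for p q r s
  proof -
    have C1: "transpose r s \<circ> transpose p q \<in> C" using tC that by simp
    have C2: "transpose p q \<circ> transpose r s \<in> C" using tC that by simp
    have "\<phi> (transpose r s \<circ> transpose p q) a
        = \<phi> (transpose r s \<circ> transpose p q) (\<phi> (transpose p q \<circ> transpose r s) a)"
      using that(7) unfolding E_def by simp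
    also have "\<dots> = \<phi> ((transpose r s \<circ> transpose p q) \<circ> (transpose p q \<circ> transpose r s)) a"
      using act_comp[OF C1 C2 a(1)] by simp
    also have "\<dots> = a" using tt_inv[of r s p q] act_id[OF a(1)] by simp
    finally show ?thesis unfolding E_def .
  qed
  have Erefl: "E p q p q" for p q unfolding E_def using act_id[OF a(1)] by simp
  have Ecomm: "E q p r s = E p q r s" for p q r s unfolding E_def by (simp add: transpose_commute)
  have pe: "\<exists>w'. w' \<in> X' \<and> w' \<noteq> w \<and> E w w' p q"
    if "p \<in> X'" "q \<in> X'" "p \<noteq> q" "w \<in> X'" for p q w
  proof -
    have wx: "w \<noteq> x" "w \<in> {1..d}" using that(4) X'I by auto
    define g0 where "g0 = transpose x w \<circ> transpose p q"
    have g0C: "g0 \<in> C" unfolding g0_def using C_tt[OF xX wx(2)] that X'I wx by simp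
    define b where "b = \<phi> g0 a"
    have pqx: "p \<noteq> x" "q \<noteq> x" using that X'I by auto
    have "g0 x = w" unfolding g0_def using pqx by simp
    then have b: "b \<in> \<Omega>" "\<pi> b = w" using act_closed[OF g0C a(1)] eqv[OF g0C a(1)] x_def b_def by auto
    have "One a b" using one_all[OF a(1) b(1)] b(2) wx x_def by simp
    then obtain z where z: "z \<in> {1..d}" "z \<noteq> x" "z \<noteq> w" "\<phi> (c3 x w z) a = b"
      unfolding One_def using b(2) x_def by auto
    have cC: "c3 x w z \<in> C" using c3_C[OF xX wx(2) z(1)] wx z by simp
    have hC: "transpose w z \<circ> transpose p q \<in> C" using tC that z X'I by simp
    have "g0 = c3 x w z \<circ> (transpose w z \<circ> transpose p q)"
      unfolding g0_def c3_def using tt_cancel[of x w w z p q] by simp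
    then have "b = \<phi> (c3 x w z) (\<phi> (transpose w z \<circ> transpose p q) a)"
      using act_comp[OF cC hC a(1)] b_def by simp
    then have "\<phi> (transpose w z \<circ> transpose p q) a = a"
      using act_cancel[OF cC act_closed[OF hC a(1)] a(1)] z(4) by simp
    then show ?thesis using z X'I unfolding E_def by blast
  qed
  have pu: "w1 = w2"
    if "p \<in> X'" "q \<in> X'" "p \<noteq> q" "w \<in> X'" "w1 \<in> X'" "w2 \<in> X'" "w1 \<noteq> w" "w2 \<noteq> w"
      "E w w1 p q" "E w w2 p q" for p q w w1 w2
  proof (rule ccontr)
    assume ne: "w1 \<noteq> w2"
    have wx: "w \<noteq> x" "w \<in> {1..d}" using that(4) X'I by auto
    define g0 where "g0 = transpose x w \<circ> transpose p q"
    have g0C: "g0 \<in> C" unfolding g0_def using C_tt[OF xX wx(2)] that X'I wx by simp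
    define b where "b = \<phi> g0 a"
    have pqx: "p \<noteq> x" "q \<noteq> x" using that X'I by auto
    have "g0 x = w" unfolding g0_def using pqx by simp
    then have b: "b \<in> \<Omega>" "\<pi> b = w" using act_closed[OF g0C a(1)] eqv[OF g0C a(1)] x_def b_def by auto
    have key: "\<phi> (c3 x w wi) a = b" if "wi \<in> X'" "wi \<noteq> w" "E w wi p q" for wi
    proof -
      have wi: "wi \<in> {1..d}" "wi \<noteq> x" using that(1) X'I by auto
      have cC: "c3 x w wi \<in> C" using c3_C[OF xX wx(2) wi(1)] wx that(2) by simp
      have hC: "transpose w wi \<circ> transpose p q \<in> C" using tC \<open>p \<in> X'\<close> \<open>q \<in> X'\<close> \<open>p \<noteq> q\<close>
        \<open>w \<in> X'\<close> that(1,2) by simp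
      have "g0 = c3 x w wi \<circ> (transpose w wi \<circ> transpose p q)"
        unfolding g0_def c3_def using tt_cancel[of x w w wi p q] by simp
      then have "b = \<phi> (c3 x w wi) (\<phi> (transpose w wi \<circ> transpose p q) a)"
        using act_comp[OF cC hC a(1)] b_def by simp
      then show ?thesis using that(3) unfolding E_def by simp
    qed
    have k1: "\<phi> (c3 x w w1) a = b" using key that by simp
    have k2: "\<phi> (c3 x w w2) a = b" using key that by simp
    have "Two a b" unfolding Two_def using k1 k2 ne that(5-8) X'I b(2) x_def[symmetric] by auto
    then show False using U[OF a(1) b(1)] b(2) wx x_def by simp
  qed
  define P where "P = (\<lambda>p q w. THE w'. w' \<in> X' \<and> w' \<noteq> w \<and> E w w' p q)"
  have Pspec: "P p q w \<in> X' \<and> P p q w \<noteq> w \<and> E w (P p q w) p q"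
    if "p \<in> X'" "q \<in> X'" "p \<noteq> q" "w \<in> X'" for p q w
  proof -
    have "\<exists>!w'. w' \<in> X' \<and> w' \<noteq> w \<and> E w w' p q"
      using pe[OF that] pu[OF that] by blast
    then show ?thesis unfolding P_def by (rule theI')
  qed
  have Peq: "w' = P p q w"
    if "p \<in> X'" "q \<in> X'" "p \<noteq> q" "w \<in> X'" "w' \<in> X'" "w' \<noteq> w" "E w w' p q" for p q w w'
    using pu[OF that(1-4) that(5) _ that(6) _ that(7)] Pspec[OF that(1-4)] by blast
  obtain p where p: "p \<in> X'" using third[OF xX xX] X'I by blast
  obtain p' where p': "p' \<in> X'" "p' \<noteq> p" using third[OF xX, of p] p X'I by blast
  have d8: "d \<noteq> 8"
  proof
    assume d8: "d = 8"
    define f where "f = P p p'"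
    have fs: "\<forall>w\<in>X'. f w \<in> X' \<and> f w \<noteq> w \<and> f (f w) = w"
    proof
      fix w assume w: "w \<in> X'"
      have s: "f w \<in> X'" "f w \<noteq> w" "E w (f w) p p'" using Pspec[OF p p'(1) p'(2)[symmetric] w] f_def by auto
      have "E (f w) w p p'" using s(3) Ecomm[of w "f w" p p'] by simp
      then have "w = f (f w)" using Peq[OF p p'(1) p'(2)[symmetric] s(1) w s(2)[symmetric]] f_def by simp
      then show "f w \<in> X' \<and> f w \<noteq> w \<and> f (f w) = w" using s by simp
    qed
    have "even (card X')" using invol_even[OF _ fs] X'_def by simp
    moreover have "card X' = d - 1" unfolding X'_def using xX by simp
    ultimately show False using d8 by simp
  qed
  have d9: "d \<le> 9"
  proof (rule ccontr)
    assume "\<not> d \<le> 9"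
    then have d10: "d \<ge> 10" by simp
    have pp: "p \<noteq> p'" using p' by simp
    have pX: "p \<in> {1..d}" "p \<noteq> x" using p X'I by auto
    have p'X: "p' \<in> {1..d}" "p' \<noteq> x" using p' X'I by auto
    obtain q where q0: "q \<in> {1..d}" "q \<notin> set [x,p,p']" using avoidL[of "[x,p,p']"] d10 by auto
    have q: "q \<in> X'" "q \<noteq> p" "q \<noteq> p'" using q0 X'I by auto
    have A: "p \<in> X'" "p' \<in> X'" "p \<noteq> p'" using p p' by auto
    define qA where "qA = P p p' q"
    obtain t where t0: "t \<in> {1..d}" "t \<notin> set [x,p,p',q,qA]" using avoidL[of "[x,p,p',q,qA]"] d10 by auto
    have t: "t \<in> X'" "t \<noteq> p" "t \<noteq> p'" "t \<noteq> q" "t \<noteq> qA" using t0 X'I by auto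
    define t' where "t' = P p p' t"
    have t's: "t' \<in> X'" "t' \<noteq> t" "E t t' p p'" using Pspec[OF A t(1)] t'_def by auto
    have t'p: "t' \<noteq> p"
    proof
      assume "t' = p"
      then have "E p t p p'" using t's(3) Ecomm[of t p p p'] by simp
      then show False using pu[OF A A(1) t(1) A(2) t(2) A(3)[symmetric] _ Erefl] t(3) by simp
    qed
    have t'p': "t' \<noteq> p'"
    proof
      assume "t' = p'"
      then have "E p' t p p'" using t's(3) Ecomm[of t p' p p'] by simp
      moreover have "E p' p p p'" using Erefl[of p p'] Ecomm[of p p' p p'] by simp
      ultimately show False using pu[OF A A(2) t(1) A(1) t(3) A(3)] t(2) by simp
    qed
    have t'q: "t' \<noteq> q"
    proof
      assume "t' = q"
      then have "E q t p p'" using t's(3) Ecomm[of t q p p'] by simp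
      then have "t = qA" using Peq[OF A q(1) t(1) t(4)] qA_def by simp
      then show False using t(5) by simp
    qed
    have B: "p' \<in> X'" "q \<in> X'" "p' \<noteq> q" using A q by auto
    define pB where "pB = P p' q p"
    define tB where "tB = P p' q t"
    define t'B where "t'B = P p' q t'"
    obtain r where r0: "r \<in> {1..d}" "r \<notin> set [x,p,p',q,t,t',pB,tB,t'B]"
      using avoidL[of "[x,p,p',q,t,t',pB,tB,t'B]"] d10 by auto
    have r: "r \<in> X'" "r \<noteq> p" "r \<noteq> p'" "r \<noteq> q" "r \<noteq> t" "r \<noteq> t'" "r \<noteq> pB" "r \<noteq> tB" "r \<noteq> t'B"
      using r0 X'I by auto
    define s where "s = P p' q r"
    have ss: "s \<in> X'" "s \<noteq> r" "E r s p' q" using Pspec[OF B r(1)] s_def by auto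
    have sp: "s \<noteq> p"
    proof
      assume "s = p"
      then have "E p r p' q" using ss(3) Ecomm[of r p p' q] by simp
      then have "r = pB" using Peq[OF B A(1) r(1) r(2)] pB_def by simp
      then show False using r(7) by simp
    qed
    have sp': "s \<noteq> p'"
    proof
      assume "s = p'"
      then have "E p' r p' q" using ss(3) Ecomm[of r p' p' q] by simp
      then show False using pu[OF B B(1) r(1) B(2) r(3) B(3)[symmetric] _ Erefl] r(4) by simp
    qed
    have sq: "s \<noteq> q"
    proof
      assume "s = q"
      then have "E q r p' q" using ss(3) Ecomm[of r q p' q] by simp
      moreover have "E q p' p' q" using Erefl[of p' q] Ecomm[of p' q p' q] by simp
      ultimately show False using pu[OF B B(2) r(1) B(1) r(4) B(3)] r(3) by simp
    qed
    have st: "s \<noteq> t"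
    proof
      assume "s = t"
      then have "E t r p' q" using ss(3) Ecomm[of r t p' q] by simp
      then have "r = tB" using Peq[OF B t(1) r(1) r(5)] tB_def by simp
      then show False using r(8) by simp
    qed
    have st': "s \<noteq> t'"
    proof
      assume "s = t'"
      then have "E t' r p' q" using ss(3) Ecomm[of r t' p' q] by simp
      then have "r = t'B" using Peq[OF B t's(1) r(1) r(6)] t'B_def by simp
      then show False using r(9) by simp
    qed
    define \<alpha> where "\<alpha> = transpose p p' \<circ> transpose t t'"
    define \<beta> where "\<beta> = transpose p' q \<circ> transpose r s"
    have \<alpha>C: "\<alpha> \<in> C" unfolding \<alpha>_def using tC[OF A(1,2) t(1) t's(1) A(3)] t's(2) by simp
    have \<beta>C: "\<beta> \<in> C" unfolding \<beta>_def using tC[OF B(1,2) r(1) ss(1) B(3)] ss(2) by simp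
    have \<alpha>a: "\<phi> \<alpha> a = a" using Esym[OF t(1) t's(1) A(1,2) t's(2)[symmetric] A(3) t's(3)]
      unfolding \<alpha>_def E_def by simp
    have \<beta>a: "\<phi> \<beta> a = a" using Esym[OF r(1) ss(1) B(1,2) ss(2)[symmetric] B(3) ss(3)]
      unfolding \<beta>_def E_def by simp
    have abC: "\<alpha> \<circ> \<beta> \<in> C" using C_comp[OF \<alpha>C \<beta>C] .
    have aba: "\<phi> (\<alpha> \<circ> \<beta>) a = a" using act_comp[OF \<alpha>C \<beta>C a(1)] \<alpha>a \<beta>a by simp
    have "\<phi> ((\<alpha> \<circ> \<beta>) \<circ> (\<alpha> \<circ> \<beta>)) a = a" using act_comp[OF abC abC a(1)] aba by simp
    moreover have "(\<alpha> \<circ> \<beta>) \<circ> (\<alpha> \<circ> \<beta>) = c3 p q p'"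
      unfolding \<alpha>_def \<beta>_def
      by (rule word) (use A q t t's t'p t'p' t'q r ss sp sp' sq st st' in auto)
    ultimately have cyc: "\<phi> (c3 p q p') a = a" by simp
    have qX: "q \<in> {1..d}" "q \<noteq> x" using q(1) X'I by auto
    have sp3: "c3 x p q = c3 x p p' \<circ> c3 p q p'" using c3_split[of x p q p'] pX p'X q qX A by auto
    have C1: "c3 x p p' \<in> C" using c3_C[OF xX pX(1) p'X(1)] pX A by auto
    have C2: "c3 p q p' \<in> C" using c3_C[OF pX(1) _ p'X(1)] q X'I by auto
    define b where "b = \<phi> (c3 x p q) a"
    have b: "b \<in> \<Omega>" "\<pi> b = p" using c3_pt[OF a(1) pX(1) _ _] pX q X'I x_def b_def by auto
    have e1: "\<phi> (c3 x p p') a = b" unfolding b_def using sp3 act_comp[OF C1 C2 a(1)] cyc by simp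
    have "Two a b" unfolding Two_def using e1 b(2) x_def[symmetric] pX p'X q X'I A b_def by auto
    then show False using U[OF a(1) b(1)] b(2) pX x_def by simp
  qed
  show ?thesis using d8 d9 by simp
qed

end


lemma count_lemma:
  assumes B: "bbt d (carrier G) \<Omega> \<phi> \<pi>" and GA: "group_action G \<Omega> \<phi>"
    and fin: "finite (carrier G)" and d2: "d \<ge> 2"
    and fc: "\<And>w. w \<in> \<Omega> \<Longrightarrow> card {v \<in> \<Omega>. \<pi> v = \<pi> w} = f"
  shows "\<exists>k. order G = (d * f) * ((d - 1) * f) * k"
proof -
  interpret B: bbt d "carrier G" \<Omega> \<phi> \<pi> using B .
  have X1: "(1::nat) \<in> {1..d}" "(2::nat) \<in> {1..d}" using d2 by auto
  have oth: "\<exists>u\<in>\<Omega>. \<pi> u \<noteq> y" for y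
  proof (cases "y = 1")
    case True
    obtain u where "u \<in> \<Omega>" "\<pi> u = 2" using B.pt_of[OF X1(2)] by blast
    then show ?thesis using True by (intro bexI[of _ u]) auto
  next
    case False
    obtain u where "u \<in> \<Omega>" "\<pi> u = 1" using B.pt_of[OF X1(1)] by blast
    then show ?thesis using False by (intro bexI[of _ u]) auto
  qed
  obtain a where a: "a \<in> \<Omega>" "\<pi> a = 1" using B.pt_of[OF X1(1)] by blast
  have orb: "orbit G \<phi> a = \<Omega>"
  proof
    show "orbit G \<phi> a \<subseteq> \<Omega>" unfolding orbit_def using B.act_closed a(1) by auto
  next
    show "\<Omega> \<subseteq> orbit G \<phi> a"
    proof
      fix w assume w: "w \<in> \<Omega>"
      obtain u where u: "u \<in> \<Omega>" "\<pi> u \<noteq> \<pi> a" using oth by blast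
      obtain v where v: "v \<in> \<Omega>" "\<pi> v \<noteq> \<pi> w" using oth by blast
      obtain g where "g \<in> carrier G" "\<phi> g a = w" using B.PT[OF a(1) u(1) w v(1)] u(2)[symmetric] v(2)[symmetric] by blast
      then show "w \<in> orbit G \<phi> a" unfolding orbit_def by blast
    qed
  qed
  have finO: "finite \<Omega>"
  proof -
    have "orbit G \<phi> a = (\<lambda>g. \<phi> g a) ` carrier G" unfolding orbit_def by blast
    then show ?thesis using orb fin by simp
  qed
  define H where "H = stabilizer G \<phi> a"
  have os1: "card \<Omega> * card H = order G"
    using group_action.orbit_stabilizer_theorem[OF GA a(1)] orb H_def by simp
  have subH: "subgroup H G" unfolding H_def using group_action.stabilizer_subgroup[OF GA a(1)] .
  have GA2: "group_action (G\<lparr>carrier := H\<rparr>) \<Omega> \<phi>" using group_action.induced_action[OF GA subH] .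
  obtain b where b: "b \<in> \<Omega>" "\<pi> b \<noteq> \<pi> a" using oth by blast
  have orb2: "orbit (G\<lparr>carrier := H\<rparr>) \<phi> b = \<Omega> - {v \<in> \<Omega>. \<pi> v = \<pi> a}"
  proof
    show "orbit (G\<lparr>carrier := H\<rparr>) \<phi> b \<subseteq> \<Omega> - {v \<in> \<Omega>. \<pi> v = \<pi> a}"
    proof
      fix w assume "w \<in> orbit (G\<lparr>carrier := H\<rparr>) \<phi> b"
      then obtain h where h: "h \<in> H" "w = \<phi> h b" unfolding orbit_def by auto
      have hG: "h \<in> carrier G" "\<phi> h a = a" using h(1) unfolding H_def stabilizer_def by auto
      have "\<pi> a = h (\<pi> a)" using B.eqv[OF hG(1) a(1)] hG(2) by simp
      moreover have "\<pi> w = h (\<pi> b)" using B.eqv[OF hG(1) b(1)] h(2) by simp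
      moreover have "h (\<pi> b) \<noteq> h (\<pi> a)" using B.C_inj[OF hG(1)] b(2) by (simp add: inj_eq)
      ultimately have "\<pi> w \<noteq> \<pi> a" by simp
      moreover have "w \<in> \<Omega>" using B.act_closed[OF hG(1) b(1)] h(2) by simp
      ultimately show "w \<in> \<Omega> - {v \<in> \<Omega>. \<pi> v = \<pi> a}" by simp
    qed
  next
    show "\<Omega> - {v \<in> \<Omega>. \<pi> v = \<pi> a} \<subseteq> orbit (G\<lparr>carrier := H\<rparr>) \<phi> b"
    proof
      fix w assume w: "w \<in> \<Omega> - {v \<in> \<Omega>. \<pi> v = \<pi> a}"
      then have w': "w \<in> \<Omega>" "\<pi> a \<noteq> \<pi> w" by auto
      obtain g where g: "g \<in> carrier G" "\<phi> g a = a" "\<phi> g b = w"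
        using B.PT[OF a(1) b(1) a(1) w'(1)] b(2) w'(2) by metis
      have "g \<in> H" unfolding H_def stabilizer_def using g by simp
      then show "w \<in> orbit (G\<lparr>carrier := H\<rparr>) \<phi> b" unfolding orbit_def using g(3) by auto
    qed
  qed
  have os2: "card (\<Omega> - {v \<in> \<Omega>. \<pi> v = \<pi> a}) * card (stabilizer (G\<lparr>carrier := H\<rparr>) \<phi> b) = card H"
    using group_action.orbit_stabilizer_theorem[OF GA2 b(1)] orb2 unfolding order_def by simp
  have Fc: "card {v \<in> \<Omega>. \<pi> v = x} = f" if xX: "x \<in> {1..d}" for x
  proof -
    obtain w where "w \<in> \<Omega>" "\<pi> w = x" using B.pt_of[OF xX] by blast
    then show ?thesis using fc by blast
  qed
  have cO: "card \<Omega> = d * f"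
  proof -
    have U: "\<Omega> = (\<Union>x\<in>{1..d}. {v \<in> \<Omega>. \<pi> v = x})" using B.pi_in by auto
    have "card (\<Union>x\<in>{1..d}. {v \<in> \<Omega>. \<pi> v = x}) = (\<Sum>x\<in>{1..d}. card {v \<in> \<Omega>. \<pi> v = x})"
      by (rule card_UN_disjoint) (use finO in auto)
    also have "\<dots> = (\<Sum>x\<in>{1..d}. f)" using Fc by simp
    finally show ?thesis using U by simp
  qed
  have cO2: "card (\<Omega> - {v \<in> \<Omega>. \<pi> v = \<pi> a}) = (d - 1) * f"
  proof -
    have "card (\<Omega> - {v \<in> \<Omega>. \<pi> v = \<pi> a}) = card \<Omega> - card {v \<in> \<Omega>. \<pi> v = \<pi> a}"
      by (rule card_Diff_subset) (use finO in auto)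
    also have "\<dots> = d * f - f" using cO fc[OF a(1)] by simp
    finally show ?thesis by (simp add: diff_mult_distrib)
  qed
  show ?thesis using os1 os2 cO cO2 by (metis mult.assoc)
qed

lemma interp:
  assumes GA: "group_action G \<Omega> \<phi>" and m: "mult G = (\<circ>)" and o: "one G = id"
    and P: "\<And>g. g \<in> carrier G \<Longrightarrow> g permutes {1..d}"
    and surj: "\<pi> ` \<Omega> = {1..d}"
    and eqv: "\<forall>g\<in>carrier G. \<forall>w\<in>\<Omega>. \<pi> (\<phi> g w) = g (\<pi> w)"
    and fib: "\<forall>x\<in>{1..d}. \<exists>a\<in>\<Omega>. \<exists>b\<in>\<Omega>. a \<noteq> b \<and> \<pi> a = x \<and> \<pi> b = x"
    and PT: "\<forall>a\<in>\<Omega>. \<forall>b\<in>\<Omega>. \<forall>c\<in>\<Omega>. \<forall>e\<in>\<Omega>. \<pi> a \<noteq> \<pi> b \<longrightarrow> \<pi> c \<noteq> \<pi> e \<longrightarrow>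
        (\<exists>g\<in>carrier G. \<phi> g a = c \<and> \<phi> g b = e)"
  shows "bbt d (carrier G) \<Omega> \<phi> \<pi>"
proof -
  have grp: "group G" using group_hom.axioms(1)[OF group_action.group_hom[OF GA]] .
  show ?thesis
  proof
    show "g \<circ> h \<in> carrier G" if "g \<in> carrier G" "h \<in> carrier G" for g h
      using group.subgroup_self[OF grp] that m by (metis monoid.m_closed group.is_monoid[OF grp])
    show "\<phi> (g \<circ> h) w = \<phi> g (\<phi> h w)" if "g \<in> carrier G" "h \<in> carrier G" "w \<in> \<Omega>" for g h w
      using group_action.composition_rule[OF GA that(3,1,2)] m by simp
    show "\<phi> g w \<in> \<Omega>" if "g \<in> carrier G" "w \<in> \<Omega>" for g w
      using group_action.element_image[OF GA that refl] .
    show "inj_on (\<phi> g) \<Omega>" if "g \<in> carrier G" for g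
      using group_action.inj_prop[OF GA that] .
    show "id \<in> carrier G" using monoid.one_closed[OF group.is_monoid[OF grp]] o by simp
    show "\<phi> id w = w" if "w \<in> \<Omega>" for w
    proof -
      have "(\<lambda>x\<in>\<Omega>. x) = \<phi> \<one>\<^bsub>G\<^esub>" using group_action.id_eq_one[OF GA] .
      then have "\<phi> id = (\<lambda>x\<in>\<Omega>. x)" using o by simp
      then show ?thesis using that by simp
    qed
  qed (use P surj eqv fib PT in blast)+
qed

theorem corollary3p6:
  fixes d :: nat and G :: "(nat \<Rightarrow> nat) monoid"
    and \<Omega> :: "'w set" and \<phi> :: "(nat \<Rightarrow> nat) \<Rightarrow> 'w \<Rightarrow> 'w" and \<pi> :: "'w \<Rightarrow> nat"
  assumes "d \<ge> 2"
    and "G = sym_group d \<or> G = alt_group d"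
  shows "\<not> proper_2bbt_extension G {1..d} (\<lambda>g x. g x) \<Omega> \<phi> \<pi>"
proof
  assume H: "proper_2bbt_extension G {1..d} (\<lambda>g x. g x) \<Omega> \<phi> \<pi>"
  have GA: "group_action G \<Omega> \<phi>" and surj: "\<pi> ` \<Omega> = {1..d}"
    and eqv: "\<forall>g\<in>carrier G. \<forall>w\<in>\<Omega>. \<pi> (\<phi> g w) = g (\<pi> w)"
    and fib: "\<forall>x\<in>{1..d}. \<exists>a\<in>\<Omega>. \<exists>b\<in>\<Omega>. a \<noteq> b \<and> \<pi> a = x \<and> \<pi> b = x"
    and PT: "\<forall>a\<in>\<Omega>. \<forall>b\<in>\<Omega>. \<forall>c\<in>\<Omega>. \<forall>e\<in>\<Omega>. \<pi> a \<noteq> \<pi> b \<longrightarrow> \<pi> c \<noteq> \<pi> e \<longrightarrow>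
        (\<exists>g\<in>carrier G. \<phi> g a = c \<and> \<phi> g b = e)"
    using H unfolding proper_2bbt_extension_def by auto
  from assms(2) show False
  proof
    assume G: "G = sym_group d"
    have B: "bbt d (carrier G) \<Omega> \<phi> \<pi>"
      by (rule interp[OF GA _ _ _ surj eqv fib PT])
         (simp_all add: G sym_group_mult sym_group_one sym_group_carrier)
    interpret B: bbt d "carrier G" \<Omega> \<phi> \<pi> using B .
    show False
    proof (rule B.sym_case[OF assms(1)])
      fix p q :: nat assume "p \<in> {1..d}" "q \<in> {1..d}"
      then show "transpose p q \<in> carrier G" unfolding G sym_group_carrier by (rule permutes_swap_id)
    qed
  next
    assume G: "G = alt_group d"
    have B: "bbt d (carrier G) \<Omega> \<phi> \<pi>"
      by (rule interp[OF GA _ _ _ surj eqv fib PT])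
         (simp_all add: G alt_group_mult alt_group_one alt_group_carrier)
    interpret B: bbt d "carrier G" \<Omega> \<phi> \<pi> using B .
    show False
    proof (cases "d \<le> 4")
      case True
      show False by (rule B.small_case[OF assms(1) True]) (simp add: G alt_group_carrier)
    next
      case False
      then have d5: "d \<ge> 5" by simp
      have ctt: "transpose p q \<circ> transpose r s \<in> carrier G"
        if "p \<in> {1..d}" "q \<in> {1..d}" "r \<in> {1..d}" "s \<in> {1..d}" "p \<noteq> q" "r \<noteq> s" for p q r s
      proof -
        have "transpose p q \<circ> transpose r s permutes {1..d}"
          using permutes_compose[OF permutes_swap_id[OF that(3,4)] permutes_swap_id[OF that(1,2)]] .
        moreover have "evenperm (transpose p q \<circ> transpose r s) = (evenperm (transpose p q) = evenperm (transpose r s))"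
          by (rule evenperm_comp[OF permutation_swap_id permutation_swap_id])
        then have "evenperm (transpose p q \<circ> transpose r s)" using that(5,6) by (simp add: evenperm_swap)
        ultimately show ?thesis unfolding G alt_group_carrier by simp
      qed
      have A: "bbt_alt d (carrier G) \<Omega> \<phi> \<pi>"
        unfolding bbt_alt_def bbt_alt_axioms_def using B ctt d5 by blast
      interpret A: bbt_alt d "carrier G" \<Omega> \<phi> \<pi> using A .
      show False
      proof (cases "\<exists>a0\<in>\<Omega>. \<exists>b0\<in>\<Omega>. \<pi> a0 \<noteq> \<pi> b0 \<and> A.Two a0 b0")
        case True
        then obtain a0 b0 where ab: "a0 \<in> \<Omega>" "b0 \<in> \<Omega>" "\<pi> a0 \<noteq> \<pi> b0" "A.Two a0 b0" by blast
        show False by (rule A.two_case) (rule A.two_spread[OF ab])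
      next
        case False
        then have U: "\<And>a b. a \<in> \<Omega> \<Longrightarrow> b \<in> \<Omega> \<Longrightarrow> \<pi> a \<noteq> \<pi> b \<Longrightarrow> \<not> A.Two a b" by blast
        have sm: "d \<le> 9 \<and> d \<noteq> 8" using A.uniq_small[OF U] .
        have fc: "\<And>w. w \<in> \<Omega> \<Longrightarrow> card {v \<in> \<Omega>. \<pi> v = \<pi> w} = d - 2" using A.uniq_card[OF U] .
        have cc: "2 * card (carrier G) = fact d" using alt_group_card_carrier[OF assms(1)] G by simp
        have fin: "finite (carrier G)"
        proof (rule ccontr)
          assume "infinite (carrier G)"
          then have "card (carrier G) = 0" by simp
          then show False using cc by simp
        qed
        obtain k where k: "order G = (d * (d - 2)) * ((d - 1) * (d - 2)) * k"
          using count_lemma[OF B GA fin assms(1) fc] by blast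
        have eq: "2 * ((d * (d - 2)) * ((d - 1) * (d - 2)) * k) = fact d"
          using cc k unfolding order_def by simp
        have "d = 5 \<or> d = 6 \<or> d = 7 \<or> d = 9" using sm d5 by auto
        then show False
        proof (elim disjE)
          assume "d = 5" then show False using eq by (simp add: fact_numeral; presburger)
        next
          assume "d = 6" then show False using eq by (simp add: fact_numeral; presburger)
        next
          assume "d = 7" then show False using eq by (simp add: fact_numeral; presburger)
        next
          assume "d = 9" then show False using eq by (simp add: fact_numeral; presburger)
        qed
      qed
    qed
  qed
qed

end
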